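(* Let $p$ be a prime and $1\le\ell<p$. For every $u\in\mathbb{F}_p$, \[\#S_\ell(u)=\binom{p}{\ell}\Big/p=S_\ell^*+S_{\ell-1}^*=S_\ell^{*0}+S_{\ell-1}^{*0}.\]
   Context: For $u\in\mathbb{F}_p$ and $0\le \ell\le p$, $S_\ell(u)=\{S\subseteq\mathbb{F}_p \mid \#S=\ell,\ \sum_{s\in S}s=u\}$, and for $0\le\ell<p$, $S_\ell^*(u)=\{S\subseteq\mathbb{F}_p^* \mid \#S=\ell,\ \sum_{s\in S}s=u\}$, where $\mathbb{F}_p^*=\mathbb{F}_p\setminus\{0\}$ and sums are in $\mathbb{F}_p$. The cardinality $\#S_\ell^*(u)$ does not depend on $u\in\mathbb{F}_p^*$; this common value is denoted $S_\ell^*$. Also $S_\ell^{*0}:=\#S_\ell^*(0)$. *)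

theory Defs
  imports Complex_Main "HOL-Computational_Algebra.Primes"
begin

text \<open>F_p is modelled by the residues {0..<p}; sums are taken mod p.\<close>

definition S_sets :: "nat \<Rightarrow> nat \<Rightarrow> nat \<Rightarrow> nat set set" where
  "S_sets p l u = {S. S \<subseteq> {0..<p} \<and> card S = l \<and> (\<Sum>S) mod p = u}"

definition S_star_sets :: "nat \<Rightarrow> nat \<Rightarrow> nat \<Rightarrow> nat set set" where
  "S_star_sets p l u = {S. S \<subseteq> {1..<p} \<and> card S = l \<and> (\<Sum>S) mod p = u}"

end

theory Submission
  imports Defs "HOL-Number_Theory.Cong"
begin

lemma fin_S: "finite (S_sets p l u)"
  unfolding S_sets_def by (rule finite_subset[of _ "Pow {0..<p}"]) auto

lemma fin_Sstar: "finite (S_star_sets p l u)"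
  unfolding S_star_sets_def by (rule finite_subset[of _ "Pow {1..<p}"]) auto

lemma decomp:
  assumes "1 \<le> l" "0 < p"
  shows "card (S_sets p l u) = card (S_star_sets p l u) + card (S_star_sets p (l - 1) u)"
proof -
  have eq: "S_sets p l u = S_star_sets p l u \<union> insert 0 ` S_star_sets p (l - 1) u"
  proof (rule set_eqI, rule iffI)
    fix S assume S: "S \<in> S_sets p l u"
    show "S \<in> S_star_sets p l u \<union> insert 0 ` S_star_sets p (l - 1) u"
    proof (cases "0 \<in> S")
      case False
      then have "S \<subseteq> {1..<p}" using S unfolding S_sets_def
        by (auto simp: subset_iff Suc_le_eq) (metis gr0I)
      then show ?thesis using S unfolding S_sets_def S_star_sets_def by auto
    next
      case True
      have fin: "finite S" using S unfolding S_sets_def by (auto intro: finite_subset)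
      have "S - {0} \<in> S_star_sets p (l - 1) u"
        using S True fin unfolding S_sets_def S_star_sets_def
        by (auto simp: subset_iff sum_diff1_nat)
      moreover have "S = insert 0 (S - {0})" using True by auto
      ultimately show ?thesis by blast
    qed
  next
    fix S assume "S \<in> S_star_sets p l u \<union> insert 0 ` S_star_sets p (l - 1) u"
    then show "S \<in> S_sets p l u"
    proof
      assume "S \<in> S_star_sets p l u" then show ?thesis
        unfolding S_sets_def S_star_sets_def by auto
    next
      assume "S \<in> insert 0 ` S_star_sets p (l - 1) u"
      then obtain T where T: "T \<in> S_star_sets p (l - 1) u" "S = insert 0 T" by auto
      have "finite T" using T unfolding S_star_sets_def by (auto intro: finite_subset)
      moreover have "0 \<notin> T" using T unfolding S_star_sets_def by auto
      ultimately show ?thesis using T assms unfolding S_sets_def S_star_sets_def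
        by auto
    qed
  qed
  have inj: "inj_on (insert 0) (S_star_sets p (l - 1) u)"
  proof (rule inj_onI)
    fix A B assume A: "A \<in> S_star_sets p (l - 1) u" and B: "B \<in> S_star_sets p (l - 1) u"
      and e: "insert 0 A = insert 0 B"
    have "0 \<notin> A" "0 \<notin> B" using A B unfolding S_star_sets_def by auto
    then show "A = B" using e by (metis Diff_insert_absorb)
  qed
  have disj: "S_star_sets p l u \<inter> insert 0 ` S_star_sets p (l - 1) u = {}"
    unfolding S_star_sets_def by auto
  have "card (S_sets p l u) = card (S_star_sets p l u) + card (insert 0 ` S_star_sets p (l - 1) u)"
    unfolding eq by (rule card_Un_disjoint[OF fin_Sstar finite_imageI[OF fin_Sstar] disj])
  also have "card (insert 0 ` S_star_sets p (l - 1) u) = card (S_star_sets p (l - 1) u)"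
    by (rule card_image[OF inj])
  finally show ?thesis .
qed

lemma shift_le:
  assumes "u < p"
  shows "card (S_sets p l u) \<le> card (S_sets p l ((u + k * l) mod p))"
proof -
  define f where "f = (\<lambda>x::nat. (x + k) mod p)"
  have injf: "inj_on f {0..<p}" unfolding f_def inj_on_def
  proof (intro ballI impI)
    fix x y assume "x \<in> {0..<p}" "y \<in> {0..<p}" "(x + k) mod p = (y + k) mod p"
    then have "[x + k = y + k] (mod p)" by (simp add: cong_def)
    then have "[int x + int k = int y + int k] (mod int p)" by (metis cong_int_iff of_nat_add)
    then have "[int x = int y] (mod int p)" by (simp add: cong_add_rcancel)
    then have "[x = y] (mod p)" by (simp add: cong_int_iff)
    then show "x = y" using \<open>x \<in> {0..<p}\<close> \<open>y \<in> {0..<p}\<close> by (simp add: cong_def)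
  qed
  have inj: "inj_on ((`) f) (S_sets p l u)"
  proof (rule inj_onI)
    fix A B assume "A \<in> S_sets p l u" "B \<in> S_sets p l u" "f ` A = f ` B"
    then show "A = B" using inj_on_image_eq_iff[OF injf, of A B] unfolding S_sets_def by simp
  qed
  have sub: "(`) f ` S_sets p l u \<subseteq> S_sets p l ((u + k * l) mod p)"
  proof
    fix T assume "T \<in> (`) f ` S_sets p l u"
    then obtain S where S: "S \<in> S_sets p l u" "T = f ` S" by auto
    have sub: "S \<subseteq> {0..<p}" and cS: "card S = l" and sS: "\<Sum>S mod p = u"
      using S unfolding S_sets_def by auto
    have fin: "finite S" using sub by (auto intro: finite_subset)
    have injS: "inj_on f S" using inj_on_subset[OF injf sub] .
    have "p > 0" using assms by auto
    then have "f ` S \<subseteq> {0..<p}" unfolding f_def by auto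
    moreover have "card (f ` S) = l" using card_image[OF injS] cS by simp
    moreover have "\<Sum>(f ` S) mod p = (u + k * l) mod p"
    proof -
      have "\<Sum>(f ` S) = (\<Sum>x\<in>S. (x + k) mod p)" unfolding f_def
        using sum.reindex[OF injS, of id] by (simp add: f_def)
      then have "\<Sum>(f ` S) mod p = (\<Sum>x\<in>S. (x + k) mod p) mod p" by simp
      also have "\<dots> = (\<Sum>x\<in>S. (x + k)) mod p"
        by (rule mod_sum_eq)
      also have "(\<Sum>x\<in>S. (x + k)) = \<Sum>S + l * k" using cS by (simp add: sum.distrib)
      also have "(\<Sum>S + l * k) mod p = (\<Sum>S mod p + l * k) mod p" by (simp add: mod_add_left_eq)
      also have "\<dots> = (u + k * l) mod p" using sS by (simp add: mult.commute)
      finally show ?thesis .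
    qed
    ultimately show "T \<in> S_sets p l ((u + k * l) mod p)"
      using S unfolding S_sets_def by auto
  qed
  show ?thesis by (rule card_inj_on_le[OF inj sub fin_S])
qed

lemma equi:
  assumes "prime p" "1 \<le> l" "l < p" "u < p" "v < p"
  shows "card (S_sets p l u) \<le> card (S_sets p l v)"
proof -
  have "\<not> p dvd l" using assms nat_dvd_not_less by auto
  then have "coprime p l" using assms(1) by (simp add: prime_imp_coprime)
  then have "coprime l p" by (simp add: coprime_commute)
  then obtain x where x: "[l * x = 1] (mod p)" using cong_solve_coprime_nat by (auto simp: One_nat_def)
  define k where "k = x * (v + p - u)"
  have "(u + k * l) mod p = (u + (l * x) * (v + p - u)) mod p"
    unfolding k_def by (simp add: ac_simps)
  also have "\<dots> = (u + 1 * (v + p - u)) mod p"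
    using x unfolding cong_def by (metis mod_add_right_eq mod_mult_left_eq)
  also have "\<dots> = v" using assms by simp
  finally show ?thesis using shift_le[OF assms(4), of l k] by simp
qed

lemma total:
  assumes "p > 0"
  shows "(\<Sum>u<p. card (S_sets p l u)) = p choose l"
proof -
  have "{S. S \<subseteq> {0..<p} \<and> card S = l} = (\<Union>u<p. S_sets p l u)"
    unfolding S_sets_def using assms by auto
  then have "p choose l = card (\<Union>u<p. S_sets p l u)"
    using n_subsets[of "{0..<p}" l] by simp
  also have "\<dots> = (\<Sum>u<p. card (S_sets p l u))"
    by (rule card_UN_disjoint) (auto simp: fin_S S_sets_def)
  finally show ?thesis by simp
qed

theorem proposition4:
  fixes p l u :: nat
  assumes "prime p" and "1 \<le> l" and "l < p" and "u < p"
  shows "real (card (S_sets p l u)) = real (p choose l) / real p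
    \<and> (\<forall>v\<in>{1..<p}. card (S_sets p l u)
          = card (S_star_sets p l v) + card (S_star_sets p (l - 1) v))
    \<and> card (S_sets p l u) = card (S_star_sets p l 0) + card (S_star_sets p (l - 1) 0)"
proof -
  have same: "card (S_sets p l v) = card (S_sets p l u)" if "v < p" for v
    using equi[OF assms(1-3) that assms(4)] equi[OF assms(1-4) that] by simp
  have p0: "p > 0" using assms by auto
  have "(\<Sum>v<p. card (S_sets p l v)) = p * card (S_sets p l u)"
    using same by simp
  then have "p choose l = p * card (S_sets p l u)" using total[OF p0] by simp
  then have 1: "real (card (S_sets p l u)) = real (p choose l) / real p"
    using p0 by (simp add: field_simps)
  have 2: "\<forall>v\<in>{1..<p}. card (S_sets p l u)
          = card (S_star_sets p l v) + card (S_star_sets p (l - 1) v)"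
    using same decomp[OF assms(2) p0] by auto
  have 3: "card (S_sets p l u) = card (S_star_sets p l 0) + card (S_star_sets p (l - 1) 0)"
    using same[OF p0] decomp[OF assms(2) p0] by metis
  show ?thesis using 1 2 3 by blast
qed

end
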